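(* If $\sum_{i=1}^M b_i<1$, then for every $\epsilon>0$ the energy-scarce solution $\mathbf r^\star$ is feasible for Problem 1, i.e. $r^\star_l>0$ and $\sigma_l(\mathbf r^\star)\le b_l$ for all $l$.
   Context: Fix an integer $M\ge1$, weights $w_1,\dots,w_M>0$, constants $b_1,\dots,b_M>0$, and $\epsilon>0$. For $\mathbf r\in(0,\infty)^M$ write $S(\mathbf r)=\sum_{i=1}^M r_i$ and define $$\sigma_l(\mathbf r)=\frac{(1-e^{-r_l\epsilon})S(\mathbf r)+r_le^{-r_l\epsilon}}{S(\mathbf r)+1}.$$ Problem 1's constraint set is $\{\mathbf r\in(0,\infty)^M:\sigma_l(\mathbf r)\le b_l\ \forall l\}$. Energy-scarce solution (when $B:=\sum_i b_i<1$): for each $l$ let $$c_l=\frac{2b_l(1-B)^2}{b_l(1-B)^2+\sqrt{b_l^2(1-B)^4+4b_l^2(1-B)^2(B-b_l)\epsilon}},$$ let $x^\star=\frac{\min_l c_l}{1-B}$, $\beta^\star=\sum_{i=1}^M \frac{1}{\sqrt{w_i}}$, and set $r^\star_l=\min\{b_l,\beta^\star\sqrt{w_l}\}\,x^\star$. *)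

theory Defs
  imports Complex_Main
begin

text \<open>Vectors in (0,inf)^M are represented as functions nat => real indexed by {1..M}.\<close>

definition S_sum :: "nat \<Rightarrow> (nat \<Rightarrow> real) \<Rightarrow> real" where
  "S_sum M r = (\<Sum>i=1..M. r i)"

definition sigma :: "nat \<Rightarrow> real \<Rightarrow> (nat \<Rightarrow> real) \<Rightarrow> nat \<Rightarrow> real" where
  "sigma M \<epsilon> r l =
     ((1 - exp (- r l * \<epsilon>)) * S_sum M r + r l * exp (- r l * \<epsilon>)) / (S_sum M r + 1)"

definition Bsum :: "nat \<Rightarrow> (nat \<Rightarrow> real) \<Rightarrow> real" where
  "Bsum M b = (\<Sum>i=1..M. b i)"

definition c_coef :: "nat \<Rightarrow> (nat \<Rightarrow> real) \<Rightarrow> real \<Rightarrow> nat \<Rightarrow> real" where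
  "c_coef M b \<epsilon> l =
     (let B = Bsum M b in
      2 * b l * (1 - B)^2 /
        (b l * (1 - B)^2 + sqrt ((b l)^2 * (1 - B)^4 + 4 * (b l)^2 * (1 - B)^2 * (B - b l) * \<epsilon>)))"

definition x_star :: "nat \<Rightarrow> (nat \<Rightarrow> real) \<Rightarrow> real \<Rightarrow> real" where
  "x_star M b \<epsilon> = Min (c_coef M b \<epsilon> ` {1..M}) / (1 - Bsum M b)"

definition beta_star :: "nat \<Rightarrow> (nat \<Rightarrow> real) \<Rightarrow> real" where
  "beta_star M w = (\<Sum>i=1..M. 1 / sqrt (w i))"

definition r_star :: "nat \<Rightarrow> (nat \<Rightarrow> real) \<Rightarrow> (nat \<Rightarrow> real) \<Rightarrow> real \<Rightarrow> nat \<Rightarrow> real" where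
  "r_star M w b \<epsilon> l = min (b l) (beta_star M w * sqrt (w l)) * x_star M b \<epsilon>"

end

theory Submission
  imports Defs
begin

lemma sig_bound:
  fixes r S e :: real
  assumes "r > 0" "S \<ge> r" "e > 0"
  shows "((1 - exp (- r * e)) * S + r * exp (- r * e)) / (S + 1) \<le> (r + (S - r) * r * e) / (S + 1)"
proof -
  have ex: "exp (- r * e) \<ge> 1 - r * e" using exp_ge_add_one_self[of "- r * e"] by simp
  have "(1 - exp (- r * e)) * S + r * exp (- r * e) = S - (S - r) * exp (- r * e)" by algebra
  also have "\<dots> \<le> S - (S - r) * (1 - r * e)"
    using ex assms by (simp add: mult_left_mono)
  also have "\<dots> = r + (S - r) * r * e" by algebra
  finally show ?thesis using assms by (simp add: divide_right_mono)
qed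

lemma quad_bound:
  fixes a D e x :: real
  assumes "a > 0" "D \<ge> 0" "e > 0" "x > 0" "x \<le> 2 / (a + sqrt (a^2 + 4*D*e))"
  shows "D * e * x^2 + a * x \<le> 1"
proof -
  define s where "s = sqrt (a^2 + 4*D*e)"
  have s0: "s \<ge> 0" unfolding s_def using assms by simp
  have ss: "s^2 = a^2 + 4*D*e" unfolding s_def using assms by simp
  define \<rho> where "\<rho> = 2 / (a + s)"
  have pos: "a + s > 0" using assms s0 by simp
  have sq2: "(a+s)^2 = 4*D*e + 2*a*(a+s)" using ss by (simp add: power2_eq_square algebra_simps)
  have gen: "D*e*(2/t)^2 + a*(2/t) = (4*D*e + 2*a*t)/t^2" if "t \<noteq> 0" for t :: real
    using that by (simp add: field_simps power2_eq_square)
  have "D * e * \<rho>^2 + a * \<rho> = (4*D*e + 2*a*(a+s)) / (a+s)^2"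
    unfolding \<rho>_def using pos gen[of "a+s"] by simp
  also have "\<dots> = (a+s)^2 / (a+s)^2" using sq2 by simp
  also have "\<dots> = 1" using pos by simp
  finally have eq: "D * e * \<rho>^2 + a * \<rho> = 1" .
  have "x \<le> \<rho>" using assms unfolding \<rho>_def s_def by simp
  hence "x^2 \<le> \<rho>^2" using assms by (simp add: power_mono)
  hence "D * e * x^2 \<le> D * e * \<rho>^2" using assms by (simp add: mult_left_mono)
  moreover have "a * x \<le> a * \<rho>" using \<open>x \<le> \<rho>\<close> assms by simp
  ultimately show ?thesis using eq by linarith
qed

lemma c_eq:
  fixes b a B e :: real
  assumes "b > 0" "a > 0" "B - b \<ge> 0" "e > 0"
  shows "2 * b * a^2 / (b * a^2 + sqrt (b^2 * a^4 + 4 * b^2 * a^2 * (B - b) * e)) / a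
       = 2 / (a + sqrt (a^2 + 4*(B-b)*e))"
proof -
  have "b^2 * a^4 + 4 * b^2 * a^2 * (B - b) * e = (b*a)^2 * (a^2 + 4*(B-b)*e)"
    by (simp add: algebra_simps power2_eq_square power4_eq_xxxx)
  hence sq: "sqrt (b^2 * a^4 + 4 * b^2 * a^2 * (B - b) * e) = b * a * sqrt (a^2 + 4*(B-b)*e)"
    using assms by (simp add: real_sqrt_mult)
  have s0: "sqrt (a^2 + 4*(B-b)*e) \<ge> 0" using assms by simp
  have den: "b * a^2 + b * a * sqrt (a^2 + 4*(B-b)*e) = (b*a) * (a + sqrt (a^2 + 4*(B-b)*e))"
    by (simp add: algebra_simps power2_eq_square)
  have num: "2 * b * a^2 = (b*a) * (2*a)" by (simp add: power2_eq_square)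
  have ba: "b*a > 0" using assms by simp
  have p: "a + sqrt (a^2 + 4*(B-b)*e) > 0" by (rule add_pos_nonneg[OF assms(2) s0])
  have gen: "(u*(2*a))/(u*t)/a = 2/t" if "u \<noteq> 0" for u t :: real
    using that assms(2) by simp
  show ?thesis unfolding sq den num using gen[of "b*a"] ba assms by simp
qed

theorem lemma4:
  fixes M :: nat and w b :: "nat \<Rightarrow> real" and \<epsilon> :: real
  assumes "M \<ge> 1"
    and "\<forall>i\<in>{1..M}. w i > 0"
    and "\<forall>i\<in>{1..M}. b i > 0"
    and "\<epsilon> > 0"
    and "(\<Sum>i=1..M. b i) < 1"
  shows "\<forall>l\<in>{1..M}. r_star M w b \<epsilon> l > 0 \<and> sigma M \<epsilon> (r_star M w b \<epsilon>) l \<le> b l"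
proof
  fix l assume l: "l \<in> {1..M}"
  define B where "B = Bsum M b"
  have BB: "B = (\<Sum>i=1..M. b i)" unfolding B_def Bsum_def by simp
  have a0: "1 - B > 0" using assms(5) BB by simp
  have hb: "\<And>j. j \<in> {1..M} \<Longrightarrow> 0 \<le> b j" using assms(3) by (simp add: less_imp_le)
  have Dge: "B - b i \<ge> 0" if "i \<in> {1..M}" for i
  proof -
    have "b i = (\<Sum>j\<in>{i}. b j)" by simp
    also have "\<dots> \<le> (\<Sum>j=1..M. b j)"
      by (rule sum_mono2) (use that hb in auto)
    finally show ?thesis using BB by simp
  qed
  define \<rho> where "\<rho> i = 2 / ((1 - B) + sqrt ((1-B)^2 + 4*(B - b i)*\<epsilon>))" for i
  have cdiv: "c_coef M b \<epsilon> i / (1 - B) = \<rho> i" if "i \<in> {1..M}" for i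
    unfolding c_coef_def Let_def B_def[symmetric] \<rho>_def
    using c_eq[of "b i" "1 - B" B \<epsilon>] that assms(3,4) a0 Dge by simp
  have \<rho>pos: "\<rho> i > 0" if "i \<in> {1..M}" for i
  proof -
    have "sqrt ((1-B)^2 + 4*(B - b i)*\<epsilon>) \<ge> 0" using Dge[OF that] assms(4) by simp
    hence "(1 - B) + sqrt ((1-B)^2 + 4*(B - b i)*\<epsilon>) > 0" by (rule add_pos_nonneg[OF a0])
    thus ?thesis unfolding \<rho>_def by simp
  qed
  have cpos: "c_coef M b \<epsilon> i > 0" if "i \<in> {1..M}" for i
  proof -
    have "c_coef M b \<epsilon> i = \<rho> i * (1 - B)" using cdiv[OF that] a0 by (simp add: field_simps)
    thus ?thesis using \<rho>pos[OF that] a0 by simp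
  qed
  have fin: "finite (c_coef M b \<epsilon> ` {1..M})" by simp
  have ne: "c_coef M b \<epsilon> ` {1..M} \<noteq> {}" using assms(1) by auto
  define m where "m = Min (c_coef M b \<epsilon> ` {1..M})"
  have mpos: "m > 0" unfolding m_def using Min_in[OF fin ne] cpos by auto
  have mle: "m \<le> c_coef M b \<epsilon> l" unfolding m_def using fin l by simp
  define x where "x = m / (1 - B)"
  have xdef: "x_star M b \<epsilon> = x" unfolding x_star_def x_def m_def B_def by simp
  have xpos: "x > 0" unfolding x_def using mpos a0 by simp
  have xle: "x \<le> \<rho> i" if "i \<in> {1..M}" for i
  proof -
    have "m \<le> c_coef M b \<epsilon> i" unfolding m_def using fin that by simp
    hence "x \<le> c_coef M b \<epsilon> i / (1 - B)" unfolding x_def using a0 by (simp add: divide_right_mono)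
    thus ?thesis using cdiv[OF that] by simp
  qed
  have ble1: "b i \<le> 1" if "i \<in> {1..M}" for i using Dge[OF that] a0 by simp
  have hw: "\<And>j. j \<in> {1..M} \<Longrightarrow> 0 \<le> 1 / sqrt (w j)" using assms(2) by (simp add: less_imp_le)
  have betage: "beta_star M w * sqrt (w i) \<ge> 1" if "i \<in> {1..M}" for i
  proof -
    have "1 / sqrt (w i) = (\<Sum>j\<in>{i}. 1 / sqrt (w j))" by simp
    also have "\<dots> \<le> beta_star M w" unfolding beta_star_def
      by (rule sum_mono2) (use that hw in auto)
    finally have "1 / sqrt (w i) \<le> beta_star M w" .
    moreover have "sqrt (w i) > 0" using assms(2) that by simp
    ultimately show ?thesis by (simp add: field_simps)
  qed
  have rs: "r_star M w b \<epsilon> i = b i * x" if "i \<in> {1..M}" for i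
    unfolding r_star_def xdef using ble1[OF that] betage[OF that] by simp
  have Ssum: "S_sum M (r_star M w b \<epsilon>) = B * x"
    unfolding S_sum_def BB using rs by (simp add: sum_distrib_right)
  have bl: "b l > 0" using assms(3) l by simp
  have rpos: "b l * x > 0" using bl xpos by simp
  have Sge: "B * x \<ge> b l * x" using Dge[OF l] xpos by (simp add: mult_right_mono)
  have "sigma M \<epsilon> (r_star M w b \<epsilon>) l \<le> (b l * x + (B * x - b l * x) * (b l * x) * \<epsilon>) / (B * x + 1)"
    unfolding sigma_def Ssum rs[OF l] using sig_bound[OF rpos Sge assms(4)] by simp
  also have "\<dots> \<le> b l"
  proof -
    have q: "(B - b l) * \<epsilon> * x^2 + (1 - B) * x \<le> 1"
      using quad_bound[OF a0 Dge[OF l] assms(4) xpos] xle[OF l] unfolding \<rho>_def by simp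
    have Bx: "B * x + 1 > 0" using Sge rpos by linarith
    have "b l * x + (B * x - b l * x) * (b l * x) * \<epsilon> = b l * (x + (B - b l) * \<epsilon> * x^2)"
      by (simp add: algebra_simps power2_eq_square)
    also have "\<dots> \<le> b l * (B * x + 1)" using q bl by (intro mult_left_mono) (auto simp: algebra_simps)
    finally show ?thesis using Bx by (simp add: divide_le_eq)
  qed
  finally show "r_star M w b \<epsilon> l > 0 \<and> sigma M \<epsilon> (r_star M w b \<epsilon>) l \<le> b l"
    using rs[OF l] rpos by simp
qed

end
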